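(* Let $\mu:so_3(K)^{\oplus5}\to so_3(K)^{\oplus3}\oplus M_3(K)$, $(a_1,a_2,a_3,a_4,a_5)\mapsto(a_1,a_2,a_3,a_4a_5)$. Its comorphism $\mu^*$ restricts to an isomorphism of $\mathrm{GL}_3(K)$-modules \[\mu^*:\big(K[T_3,Z]^{\mathrm{SO}_3(K)}\big)^{(\mathbb N_0,\mathbb N_0,\mathbb N_0,1)}\xrightarrow{\ \cong\ }\big(K[T_5]^{\mathrm{SO}_3(K)}\big)^{(\mathbb N_0,\mathbb N_0,\mathbb N_0,1,1)}.\]
   Context: $K$ is a field of characteristic $0$; $so_3(K)$ is the space of $3\times3$ skew-symmetric matrices. $K[T_p]$, $T_p=\{t^{(k)}_{ij}\mid 1\le i<j\le3,\ 1\le k\le p\}$, is the coordinate ring of $so_3(K)^{\oplus p}$, and $K[T_3,Z]$, $Z=\{z_{ij}\mid1\le i,j\le3\}$, that of $so_3(K)^{\oplus3}\oplus M_3(K)$; $\mathrm{SO}_3(K)$ acts on all these spaces by simultaneous conjugation. $(K[T_3,Z]^{\mathrm{SO}_3(K)})^{(\mathbb N_0,\mathbb N_0,\mathbb N_0,1)}$ denotes the invariants of degree one in the $z_{ij}$, and $(K[T_5]^{\mathrm{SO}_3(K)})^{(\mathbb N_0,\mathbb N_0,\mathbb N_0,1,1)}$ the invariants of degree one in the entries of the fourth and of the fifth component. $\mathrm{GL}_p(K)$ acts on $K[T_p]$ by $g\cdot t^{(k)}_{ij}=\sum_l g_{lk}t^{(l)}_{ij}$; $\mathrm{GL}_3(K)$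 acts on $K[T_3,Z]$ this way fixing the $z_{ij}$, and on $K[T_5]$ via the embedding $g\mapsto\mathrm{diag}(g,1,1)$ of $\mathrm{GL}_3(K)$ into $\mathrm{GL}_5(K)$. *)

theory Defs
  imports "HOL-Library.Poly_Mapping" "Jordan_Normal_Form.Determinant"
begin

text \<open>A polynomial over K in variables of type 'v is a finitely supported map from
monomials (finitely supported exponent vectors 'v \<Rightarrow>0 nat) to coefficients.\<close>

type_synonym ('v, 'k) mpoly = "('v \<Rightarrow>\<^sub>0 nat) \<Rightarrow>\<^sub>0 'k"

definition PVar :: "'v \<Rightarrow> ('v, 'k::comm_ring_1) mpoly" where
  "PVar v = Poly_Mapping.single (Poly_Mapping.single v 1) 1"

definition PConst :: "'k::comm_ring_1 \<Rightarrow> ('v, 'k) mpoly" where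
  "PConst c = Poly_Mapping.single 0 c"

text \<open>K-algebra homomorphism determined by images of the variables (substitution);
this is how comorphisms and the induced actions on coordinate rings are given.\<close>
definition psubst :: "('v \<Rightarrow> ('w, 'k::comm_ring_1) mpoly) \<Rightarrow> ('v, 'k) mpoly \<Rightarrow> ('w, 'k) mpoly" where
  "psubst \<sigma> p = (\<Sum>m\<in>Poly_Mapping.keys p.
      PConst (Poly_Mapping.lookup p m) * (\<Prod>v\<in>Poly_Mapping.keys m. \<sigma> v ^ Poly_Mapping.lookup m v))"

definition poly_in :: "'v set \<Rightarrow> ('v, 'k::zero) mpoly \<Rightarrow> bool" where
  "poly_in V p \<longleftrightarrow> (\<forall>m\<in>Poly_Mapping.keys p. Poly_Mapping.keys m \<subseteq> V)"

definition deg_in :: "'v set \<Rightarrow> ('v \<Rightarrow>\<^sub>0 nat) \<Rightarrow> nat" where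
  "deg_in S m = (\<Sum>v\<in>Poly_Mapping.keys m \<inter> S. Poly_Mapping.lookup m v)"

text \<open>Indices are 0-based: TV k i j is the coordinate t^(k+1)_{(i+1)(j+1)} (used with i<j<3),
ZV i j is the coordinate z_{(i+1)(j+1)}.\<close>
datatype var = TV nat nat nat | ZV nat nat

definition Tvars :: "nat \<Rightarrow> var set" where
  "Tvars p = {TV k i j | k i j. k < p \<and> i < j \<and> j < 3}"

definition Zvars :: "var set" where
  "Zvars = {ZV i j | i j. i < 3 \<and> j < 3}"

definition comp_vars :: "nat \<Rightarrow> var set" where
  "comp_vars k = {TV k i j | i j. i < j \<and> j < 3}"

definition gen_skew :: "nat \<Rightarrow> (var, 'k::comm_ring_1) mpoly mat" where
  "gen_skew k = mat 3 3 (\<lambda>(i,j). if i < j then PVar (TV k i j)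
                                  else if j < i then - PVar (TV k j i) else 0)"

definition gen_Z :: "(var, 'k::comm_ring_1) mpoly mat" where
  "gen_Z = mat 3 3 (\<lambda>(i,j). PVar (ZV i j))"

definition SO3 :: "'k::comm_ring_1 mat set" where
  "SO3 = {g \<in> carrier_mat 3 3. transpose_mat g * g = 1\<^sub>m 3 \<and> det g = 1}"

definition GL3 :: "'k::comm_ring_1 mat set" where
  "GL3 = {g \<in> carrier_mat 3 3. det g \<noteq> 0}"

text \<open>Action of g in SO3 on coordinate rings: (g.f)(x) = f(g^{-1} x g), g^{-1} = g^T,
componentwise on all summands (skew components and the M_3 component).\<close>
definition so_act :: "'k::comm_ring_1 mat \<Rightarrow> (var, 'k) mpoly \<Rightarrow> (var, 'k) mpoly" where
  "so_act g = psubst (\<lambda>v. let G = map_mat PConst g in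
      (case v of TV k i j \<Rightarrow> (transpose_mat G * gen_skew k * G) $$ (i,j)
               | ZV i j \<Rightarrow> (transpose_mat G * gen_Z * G) $$ (i,j)))"

definition so_invariant :: "(var, 'k::comm_ring_1) mpoly \<Rightarrow> bool" where
  "so_invariant p \<longleftrightarrow> (\<forall>g\<in>SO3. so_act g p = p)"

text \<open>GL_3 action: g.t^(k)_ij = sum_l g_lk t^(l)_ij for the first three components;
the z_ij and the components 4,5 (i.e. via diag(g,1,1)) are fixed.\<close>
definition gl_act :: "'k::comm_ring_1 mat \<Rightarrow> (var, 'k) mpoly \<Rightarrow> (var, 'k) mpoly" where
  "gl_act g = psubst (\<lambda>v. case v of
        TV k i j \<Rightarrow> (if k < 3 then (\<Sum>l<3. PConst (g $$ (l,k)) * PVar (TV l i j)) else PVar v)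
      | ZV i j \<Rightarrow> PVar v)"

definition inv_TZ_deg1 :: "(var, 'k::comm_ring_1) mpoly set" where
  "inv_TZ_deg1 = {p. poly_in (Tvars 3 \<union> Zvars) p \<and> so_invariant p \<and>
                      (\<forall>m\<in>Poly_Mapping.keys p. deg_in Zvars m = 1)}"

definition inv_T5_deg11 :: "(var, 'k::comm_ring_1) mpoly set" where
  "inv_T5_deg11 = {p. poly_in (Tvars 5) p \<and> so_invariant p \<and>
                      (\<forall>m\<in>Poly_Mapping.keys p. deg_in (comp_vars 3) m = 1 \<and> deg_in (comp_vars 4) m = 1)}"

text \<open>Comorphism of mu(a1,...,a5) = (a1,a2,a3,a4 a5): f \<mapsto> f \<circ> mu.\<close>
definition mu_star :: "(var, 'k::comm_ring_1) mpoly \<Rightarrow> (var, 'k) mpoly" where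
  "mu_star = psubst (\<lambda>v. case v of
        TV k i j \<Rightarrow> (if k < 3 then PVar v else 0)
      | ZV i j \<Rightarrow> (gen_skew 3 * gen_skew 4) $$ (i,j))"

end

theory Submission
  imports Defs
begin


lemma lookup_map_pm: "Poly_Mapping.lookup (Poly_Mapping.map f p) k = (f (Poly_Mapping.lookup p k) when Poly_Mapping.lookup p k \<noteq> 0)"
  by transfer simp

lemma PConst_0[simp]: "PConst 0 = 0" by (simp add: PConst_def)
lemma PConst_1[simp]: "PConst 1 = 1" by (simp add: PConst_def)
lemma PConst_add: "PConst (a + b) = PConst a + PConst b" by (simp add: PConst_def single_add)
lemma PConst_mult: "PConst (a * b) = PConst a * PConst b" by (simp add: PConst_def mult_single)
lemma PConst_uminus: "PConst (- a) = - PConst a" by (simp add: PConst_def single_uminus)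

lemma lookup_PConst_mult: "Poly_Mapping.lookup (PConst c * p) m = c * Poly_Mapping.lookup p m"
  by (simp add: PConst_def mult_map_scale_conv_mult[symmetric] lookup_map_pm when_def)

lemma keys_PConst_mult: "Poly_Mapping.keys (PConst c * p) \<subseteq> Poly_Mapping.keys p"
  by (auto simp: lookup_PConst_mult in_keys_iff)

lemma PConst_single: "PConst c * Poly_Mapping.single m d = Poly_Mapping.single m (c * d)"
  by (simp add: PConst_def mult_single)

definition lin :: "(('v \<Rightarrow>\<^sub>0 nat) \<Rightarrow> ('w,'k) mpoly) \<Rightarrow> ('v,'k) mpoly \<Rightarrow> ('w,'k::comm_ring_1) mpoly" where
  "lin N p = (\<Sum>m\<in>Poly_Mapping.keys p. PConst (Poly_Mapping.lookup p m) * N m)"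

definition mon :: "('v \<Rightarrow> ('w,'k) mpoly) \<Rightarrow> ('v \<Rightarrow>\<^sub>0 nat) \<Rightarrow> ('w,'k::comm_ring_1) mpoly" where
  "mon \<sigma> m = (\<Prod>v\<in>Poly_Mapping.keys m. \<sigma> v ^ Poly_Mapping.lookup m v)"

lemma psubst_lin: "psubst \<sigma> = lin (mon \<sigma>)"
  by (auto simp: fun_eq_iff psubst_def lin_def mon_def)

lemma lin_superset:
  assumes "finite S" "Poly_Mapping.keys p \<subseteq> S"
  shows "lin N p = (\<Sum>m\<in>S. PConst (Poly_Mapping.lookup p m) * N m)"
  unfolding lin_def
  by (rule sum.mono_neutral_left) (use assms in \<open>auto simp: in_keys_iff\<close>)

lemma lin_add: "lin N (p + q) = lin N p + lin N q"
proof -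
  let ?S = "Poly_Mapping.keys p \<union> Poly_Mapping.keys q"
  have "lin N (p + q) = (\<Sum>m\<in>?S. PConst (Poly_Mapping.lookup (p+q) m) * N m)"
    by (rule lin_superset) (auto dest: subsetD[OF keys_add])
  also have "\<dots> = (\<Sum>m\<in>?S. PConst (Poly_Mapping.lookup p m) * N m) + (\<Sum>m\<in>?S. PConst (Poly_Mapping.lookup q m) * N m)"
    by (simp add: lookup_add PConst_add distrib_right sum.distrib)
  also have "\<dots> = lin N p + lin N q"
    by (simp add: lin_superset[symmetric])
  finally show ?thesis .
qed

lemma lin_zero[simp]: "lin N 0 = 0" by (simp add: lin_def)

lemma lin_uminus: "lin N (- p) = - lin N p"
  using lin_add[of N p "-p"] by (metis neg_eq_iff_add_eq_0 lin_zero right_minus)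

lemma lin_single: "lin N (Poly_Mapping.single m c) = PConst c * N m"
  by (simp add: lin_def)

lemma lin_PConst_mult: "lin N (PConst c * p) = PConst c * lin N p"
proof -
  have "lin N (PConst c * p) = (\<Sum>m\<in>Poly_Mapping.keys p. PConst (Poly_Mapping.lookup (PConst c * p) m) * N m)"
    by (rule lin_superset) (auto dest: subsetD[OF keys_PConst_mult])
  also have "\<dots> = PConst c * lin N p"
    by (simp add: lin_def lookup_PConst_mult PConst_mult sum_distrib_left mult.assoc)
  finally show ?thesis .
qed

lemma lin_sum: "lin N (sum f A) = (\<Sum>a\<in>A. lin N (f a))"
  by (induction A rule: infinite_finite_induct) (auto simp: lin_add)

lemma poly_expand: "p = (\<Sum>m\<in>Poly_Mapping.keys p. PConst (Poly_Mapping.lookup p m) * Poly_Mapping.single m 1)"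
  by (rule poly_mapping_eqI) (auto simp: lookup_sum PConst_single lookup_single when_def in_keys_iff
      intro: sum.neutral elim!: sum.delta_remove) 


lemma pm_expand: "(p :: 'a \<Rightarrow>\<^sub>0 'b::comm_monoid_add) = (\<Sum>m\<in>Poly_Mapping.keys p. Poly_Mapping.single m (Poly_Mapping.lookup p m))"
  by (rule poly_mapping_eqI) (auto simp: lookup_sum lookup_single when_def in_keys_iff
      intro: sum.neutral elim!: sum.delta_remove)

lemma mon_superset:
  assumes "finite S" "Poly_Mapping.keys m \<subseteq> S"
  shows "mon \<sigma> m = (\<Prod>v\<in>S. \<sigma> v ^ Poly_Mapping.lookup m v)"
  unfolding mon_def
  by (rule prod.mono_neutral_left) (use assms in \<open>auto simp: in_keys_iff\<close>)

lemma mon_add: "mon \<sigma> (m1 + m2) = mon \<sigma> m1 * mon \<sigma> m2"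
proof -
  let ?S = "Poly_Mapping.keys m1 \<union> Poly_Mapping.keys m2"
  have "mon \<sigma> (m1 + m2) = (\<Prod>v\<in>?S. \<sigma> v ^ Poly_Mapping.lookup (m1+m2) v)"
    by (rule mon_superset) (auto dest: subsetD[OF keys_add])
  also have "\<dots> = (\<Prod>v\<in>?S. \<sigma> v ^ Poly_Mapping.lookup m1 v) * (\<Prod>v\<in>?S. \<sigma> v ^ Poly_Mapping.lookup m2 v)"
    by (simp add: lookup_add power_add prod.distrib)
  also have "\<dots> = mon \<sigma> m1 * mon \<sigma> m2"
    by (simp add: mon_superset[symmetric])
  finally show ?thesis .
qed

lemma mon_zero[simp]: "mon \<sigma> 0 = 1" by (simp add: mon_def)

lemma mon_single: "mon \<sigma> (Poly_Mapping.single v n) = \<sigma> v ^ n"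
  by (cases "n = 0") (simp_all add: mon_def)

lemma mon_sum: "mon \<sigma> (sum f A) = (\<Prod>a\<in>A. mon \<sigma> (f a))"
  by (induction A rule: infinite_finite_induct) (auto simp: mon_add)

lemma PVar_power: "PVar v ^ n = Poly_Mapping.single (Poly_Mapping.single v n) 1"
  by (induction n) (simp_all add: PVar_def mult_single add.commute flip: single_add)

lemma single_sum_one: "Poly_Mapping.single (sum f A) (1::'k::comm_ring_1) = (\<Prod>a\<in>A. Poly_Mapping.single (f a) 1)"
proof (induction A rule: infinite_finite_induct)
  case (insert x F)
  have "Poly_Mapping.single (sum f (insert x F)) (1::'k) = Poly_Mapping.single (f x) 1 * Poly_Mapping.single (sum f F) 1"
    by (simp add: sum.insert[OF insert(1,2)] mult_single)
  then show ?case using insert by simp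
qed auto

lemma mon_PVar: "mon PVar m = (Poly_Mapping.single m 1 :: ('v,'k::comm_ring_1) mpoly)"
proof -
  have "mon PVar m = (\<Prod>v\<in>Poly_Mapping.keys m. PVar v ^ Poly_Mapping.lookup m v)" by (simp add: mon_def)
  also have "\<dots> = (\<Prod>v\<in>Poly_Mapping.keys m. Poly_Mapping.single (Poly_Mapping.single v (Poly_Mapping.lookup m v)) (1::'k))"
    by (simp add: PVar_power)
  also have "\<dots> = Poly_Mapping.single (\<Sum>v\<in>Poly_Mapping.keys m. Poly_Mapping.single v (Poly_Mapping.lookup m v)) 1"
    by (simp add: single_sum_one)
  also have "\<dots> = Poly_Mapping.single m 1" using pm_expand[of m] by simp
  finally show ?thesis .
qed

lemma mult_expand: "(p::('v,'k::comm_ring_1) mpoly) * q = (\<Sum>a\<in>Poly_Mapping.keys p. \<Sum>b\<in>Poly_Mapping.keys q.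
   Poly_Mapping.single (a+b) (Poly_Mapping.lookup p a * Poly_Mapping.lookup q b))"
proof -
  have "p * q = (\<Sum>a\<in>Poly_Mapping.keys p. Poly_Mapping.single a (Poly_Mapping.lookup p a)) *
     (\<Sum>b\<in>Poly_Mapping.keys q. Poly_Mapping.single b (Poly_Mapping.lookup q b))"
    using pm_expand[of p] pm_expand[of q] by simp
  also have "\<dots> = (\<Sum>a\<in>Poly_Mapping.keys p. \<Sum>b\<in>Poly_Mapping.keys q.
   Poly_Mapping.single (a+b) (Poly_Mapping.lookup p a * Poly_Mapping.lookup q b))" by (simp add: sum_product mult_single)
  finally show ?thesis .
qed

lemma lin_mon_mult: "lin (mon \<sigma>) (p * q) = lin (mon \<sigma>) p * lin (mon \<sigma>) q"
proof -
  have "lin (mon \<sigma>) (p * q) = (\<Sum>a\<in>Poly_Mapping.keys p. \<Sum>b\<in>Poly_Mapping.keys q.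
     PConst (Poly_Mapping.lookup p a) * mon \<sigma> a * (PConst (Poly_Mapping.lookup q b) * mon \<sigma> b))"
    by (subst mult_expand) (simp add: lin_sum lin_single mon_add PConst_mult mult_ac)
  also have "\<dots> = lin (mon \<sigma>) p * lin (mon \<sigma>) q"
    by (simp add: lin_def sum_product)
  finally show ?thesis .
qed

lemma psubst_one: "psubst \<sigma> 1 = 1"
  by (simp add: psubst_lin lin_def)

interpretation psubst_hom: comm_ring_hom "psubst \<sigma>" for \<sigma>
  by unfold_locales (simp_all add: psubst_lin lin_add lin_mon_mult, simp add: lin_def)

interpretation PConst_hom: comm_ring_hom PConst
  by unfold_locales (simp_all add: PConst_add PConst_mult)

lemma psubst_PVar[simp]: "psubst \<sigma> (PVar v) = \<sigma> v"
  by (simp add: psubst_lin PVar_def lin_single mon_single)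

lemma psubst_PConst[simp]: "psubst \<sigma> (PConst c) = PConst c"
  by (simp add: psubst_lin PConst_def lin_single)

lemma psubst_single: "psubst \<sigma> (Poly_Mapping.single m c) = PConst c * mon \<sigma> m"
  by (simp add: psubst_lin lin_single)

lemma psubst_comp: "psubst \<tau> (psubst \<sigma> p) = psubst (\<lambda>v. psubst \<tau> (\<sigma> v)) p"
  unfolding psubst_def[of \<sigma>] by (simp add: psubst_hom.hom_sum psubst_hom.hom_mult psubst_hom.hom_prod
     psubst_hom.hom_power psubst_def[of "\<lambda>v. psubst \<tau> (\<sigma> v)"])

lemma psubst_cong:
  assumes "poly_in V p" "\<And>v. v \<in> V \<Longrightarrow> \<sigma> v = \<tau> v"
  shows "psubst \<sigma> p = psubst \<tau> p"
proof -
  have "mon \<sigma> m = mon \<tau> m" if "m \<in> Poly_Mapping.keys p" for m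
    unfolding mon_def
  proof (rule prod.cong[OF refl])
    fix v assume "v \<in> Poly_Mapping.keys m"
    then have "v \<in> V" using assms(1) that unfolding poly_in_def by blast
    then show "\<sigma> v ^ Poly_Mapping.lookup m v = \<tau> v ^ Poly_Mapping.lookup m v" using assms(2) by simp
  qed
  then show ?thesis unfolding psubst_lin lin_def by (intro sum.cong refl) simp
qed

lemma psubst_PVar_id: "psubst PVar p = p"
proof -
  have "psubst PVar p = (\<Sum>m\<in>Poly_Mapping.keys p. Poly_Mapping.single m (Poly_Mapping.lookup p m))"
    by (simp add: psubst_lin lin_def mon_PVar PConst_single)
  also have "\<dots> = p" by (rule pm_expand[symmetric])
  finally show ?thesis .
qed


lemma poly_in_0[simp]: "poly_in V 0" by (simp add: poly_in_def)
lemma keys_uminus_pm: "Poly_Mapping.keys (- (p :: 'a \<Rightarrow>\<^sub>0 'b::ab_group_add)) = Poly_Mapping.keys p"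
  by transfer auto
lemma poly_in_add: "poly_in V p \<Longrightarrow> poly_in V q \<Longrightarrow> poly_in V (p + q)"
  unfolding poly_in_def using keys_add[of p q] by blast
lemma poly_in_uminus: "poly_in V (p::('v,'k::comm_ring_1) mpoly) \<Longrightarrow> poly_in V (- p)"
  unfolding poly_in_def by (simp only: keys_uminus_pm)
lemma poly_in_diff: "poly_in V p \<Longrightarrow> poly_in V q \<Longrightarrow> poly_in V (p - (q::('v,'k::comm_ring_1) mpoly))"
  using poly_in_add[of V p "-q"] poly_in_uminus[of V q] by simp
lemma poly_in_mult:
  assumes "poly_in V p" "poly_in V q" shows "poly_in V (p * q)"
  unfolding poly_in_def
proof
  fix m assume "m \<in> Poly_Mapping.keys (p * q)"
  then obtain a b where ab: "m = a + b" "a \<in> Poly_Mapping.keys p" "b \<in> Poly_Mapping.keys q"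
    using keys_mult[of p q] by blast
  have "Poly_Mapping.keys a \<subseteq> V" "Poly_Mapping.keys b \<subseteq> V"
    using assms ab unfolding poly_in_def by auto
  then show "Poly_Mapping.keys m \<subseteq> V" using keys_add[of a b] ab(1) by blast
qed
lemma poly_in_PConst[simp]: "poly_in V (PConst c)" by (simp add: poly_in_def PConst_def)
lemma poly_in_one[simp]: "poly_in V 1" by (simp add: poly_in_def)
lemma poly_in_PVar: "v \<in> V \<Longrightarrow> poly_in V (PVar v)" by (simp add: poly_in_def PVar_def)
lemma poly_in_sum: "(\<And>a. a \<in> A \<Longrightarrow> poly_in V (f a)) \<Longrightarrow> poly_in V (sum f A)"
  by (induction A rule: infinite_finite_induct) (auto intro: poly_in_add)
lemma poly_in_prod: "(\<And>a. a \<in> A \<Longrightarrow> poly_in V (f a)) \<Longrightarrow> poly_in V (prod f A)"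
  by (induction A rule: infinite_finite_induct) (auto intro: poly_in_mult)
lemma poly_in_power: "poly_in V p \<Longrightarrow> poly_in V (p ^ n)"
  by (induction n) (auto intro: poly_in_mult)
lemma poly_in_single: "Poly_Mapping.keys m \<subseteq> V \<Longrightarrow> poly_in V (Poly_Mapping.single m c)"
  by (simp add: poly_in_def)
lemma poly_in_mono: "poly_in V p \<Longrightarrow> V \<subseteq> W \<Longrightarrow> poly_in W p"
  by (auto simp: poly_in_def)

lemma poly_in_psubst:
  assumes "poly_in V p" "\<And>v. v \<in> V \<Longrightarrow> poly_in W (\<sigma> v)"
  shows "poly_in W (psubst \<sigma> p)"
  unfolding psubst_def
proof (intro poly_in_sum poly_in_mult poly_in_PConst poly_in_prod poly_in_power)
  fix m v assume "m \<in> Poly_Mapping.keys p" "v \<in> Poly_Mapping.keys m"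
  then have "v \<in> V" using assms(1) unfolding poly_in_def by blast
  then show "poly_in W (\<sigma> v)" by (rule assms(2))
qed

lemma deg_in_superset:
  assumes "finite T" "Poly_Mapping.keys m \<subseteq> T"
  shows "deg_in S m = (\<Sum>v\<in>T \<inter> S. Poly_Mapping.lookup m v)"
  unfolding deg_in_def
  by (rule sum.mono_neutral_left) (use assms in \<open>auto simp: in_keys_iff\<close>)

lemma deg_in_add: "deg_in S (a + b) = deg_in S a + deg_in S b"
proof -
  let ?T = "Poly_Mapping.keys a \<union> Poly_Mapping.keys b"
  have "deg_in S (a + b) = (\<Sum>v\<in>?T \<inter> S. Poly_Mapping.lookup (a+b) v)"
    by (rule deg_in_superset) (auto dest: subsetD[OF keys_add])
  also have "\<dots> = (\<Sum>v\<in>?T \<inter> S. Poly_Mapping.lookup a v) + (\<Sum>v\<in>?T \<inter> S. Poly_Mapping.lookup b v)"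
    by (simp add: lookup_add sum.distrib)
  also have "\<dots> = deg_in S a + deg_in S b"
    by (simp add: deg_in_superset[symmetric])
  finally show ?thesis .
qed

lemma deg_in_0[simp]: "deg_in S 0 = 0" by (simp add: deg_in_def)

lemma deg_in_single: "deg_in S (Poly_Mapping.single v n) = (if v \<in> S then n else 0)"
  by (cases "n = 0") (auto simp: deg_in_def)

definition hdeg :: "'v set \<Rightarrow> nat \<Rightarrow> ('v,'k::comm_ring_1) mpoly \<Rightarrow> bool" where
  "hdeg S d p \<longleftrightarrow> (\<forall>m\<in>Poly_Mapping.keys p. deg_in S m = d)"

lemma hdeg_0[simp]: "hdeg S d 0" by (simp add: hdeg_def)
lemma hdeg_add: "hdeg S d p \<Longrightarrow> hdeg S d q \<Longrightarrow> hdeg S d (p + q)"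
  unfolding hdeg_def using keys_add[of p q] by blast
lemma hdeg_uminus: "hdeg S d p \<Longrightarrow> hdeg S d (- p)"
  unfolding hdeg_def by (simp only: keys_uminus_pm)
lemma hdeg_diff: "hdeg S d p \<Longrightarrow> hdeg S d q \<Longrightarrow> hdeg S d (p - q)"
  using hdeg_add[of S d p "-q"] hdeg_uminus[of S d q] by simp
lemma hdeg_mult:
  assumes "hdeg S d1 p" "hdeg S d2 q" shows "hdeg S (d1 + d2) (p * q)"
  unfolding hdeg_def
proof
  fix m assume "m \<in> Poly_Mapping.keys (p * q)"
  then obtain a b where ab: "m = a + b" "a \<in> Poly_Mapping.keys p" "b \<in> Poly_Mapping.keys q"
    using keys_mult[of p q] by blast
  then show "deg_in S m = d1 + d2" using assms unfolding hdeg_def by (simp add: deg_in_add)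
qed
lemma hdeg_mult': "hdeg S d1 p \<Longrightarrow> hdeg S d2 q \<Longrightarrow> d = d1 + d2 \<Longrightarrow> hdeg S d (p * q)"
  using hdeg_mult by blast
lemma hdeg_PConst[simp]: "hdeg S 0 (PConst c)" by (simp add: hdeg_def PConst_def)
lemma hdeg_one[simp]: "hdeg S 0 1" by (simp add: hdeg_def)
lemma hdeg_PVar: "hdeg S (if v \<in> S then 1 else 0) (PVar v)"
  by (simp add: hdeg_def PVar_def deg_in_single)
lemma hdeg_PVar_in: "v \<in> S \<Longrightarrow> hdeg S 1 (PVar v)"
  using hdeg_PVar[of S v] by simp
lemma hdeg_PVar_notin: "v \<notin> S \<Longrightarrow> hdeg S 0 (PVar v)"
  using hdeg_PVar[of S v] by simp
lemma hdeg_PConst_mult: "hdeg S d p \<Longrightarrow> hdeg S d (PConst c * p)"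
  using hdeg_mult[of S 0 "PConst c" d p] by simp
lemma hdeg_sum: "(\<And>a. a \<in> A \<Longrightarrow> hdeg S d (f a)) \<Longrightarrow> hdeg S d (sum f A)"
  by (induction A rule: infinite_finite_induct) (auto intro: hdeg_add)
lemma hdeg_power: assumes "hdeg S d p" shows "hdeg S (d * n) (p ^ n)"
proof (induction n)
  case (Suc n)
  then show ?case using hdeg_mult[OF assms Suc] by simp
qed simp
lemma hdeg_prod: "(\<And>a. a \<in> A \<Longrightarrow> hdeg S (e a) (f a)) \<Longrightarrow> hdeg S (\<Sum>a\<in>A. e a) (prod f A)"
proof (induction A rule: infinite_finite_induct)
  case (insert x F)
  then show ?case using hdeg_mult[of S "e x" "f x" "sum e F" "prod f F"] by simp
qed auto

lemma hdeg_psubst: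
  assumes "poly_in V p" "hdeg S d p" "\<And>v. v \<in> V \<Longrightarrow> hdeg S' (if v \<in> S then 1 else 0) (\<sigma> v)"
  shows "hdeg S' d (psubst \<sigma> p)"
  unfolding psubst_def
proof (intro hdeg_sum hdeg_PConst_mult)
  fix m assume m: "m \<in> Poly_Mapping.keys p"
  have "hdeg S' (\<Sum>v\<in>Poly_Mapping.keys m. (if v \<in> S then 1 else 0) * Poly_Mapping.lookup m v)
         (\<Prod>v\<in>Poly_Mapping.keys m. \<sigma> v ^ Poly_Mapping.lookup m v)"
  proof (intro hdeg_prod hdeg_power)
    fix v assume "v \<in> Poly_Mapping.keys m"
    then have "v \<in> V" using assms(1) m unfolding poly_in_def by blast
    then show "hdeg S' (if v \<in> S then 1 else 0) (\<sigma> v)" by (rule assms(3))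
  qed
  moreover have "(\<Sum>v\<in>Poly_Mapping.keys m. (if v \<in> S then 1 else 0) * Poly_Mapping.lookup m v) = deg_in S m"
    unfolding deg_in_def by (simp add: sum.inter_restrict, intro sum.cong refl) auto
  moreover have "deg_in S m = d" using assms(2) m unfolding hdeg_def by blast
  ultimately show "hdeg S' d (\<Prod>v\<in>Poly_Mapping.keys m. \<sigma> v ^ Poly_Mapping.lookup m v)" by simp
qed


abbreviation Gm :: "'k::comm_ring_1 mat \<Rightarrow> (var,'k) mpoly mat" where
  "Gm g \<equiv> map_mat PConst g"

definition so\<sigma> :: "'k::comm_ring_1 mat \<Rightarrow> var \<Rightarrow> (var,'k) mpoly" where
  "so\<sigma> g v = (case v of TV k i j \<Rightarrow> (transpose_mat (Gm g) * gen_skew k * Gm g) $$ (i,j)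
               | ZV i j \<Rightarrow> (transpose_mat (Gm g) * gen_Z * Gm g) $$ (i,j))"

definition gl\<sigma> :: "'k::comm_ring_1 mat \<Rightarrow> var \<Rightarrow> (var,'k) mpoly" where
  "gl\<sigma> g v = (case v of
        TV k i j \<Rightarrow> (if k < 3 then (\<Sum>l<3. PConst (g $$ (l,k)) * PVar (TV l i j)) else PVar v)
      | ZV i j \<Rightarrow> PVar v)"

definition mu\<sigma> :: "var \<Rightarrow> (var,'k::comm_ring_1) mpoly" where
  "mu\<sigma> v = (case v of
        TV k i j \<Rightarrow> (if k < 3 then PVar v else 0)
      | ZV i j \<Rightarrow> (gen_skew 3 * gen_skew 4) $$ (i,j))"

lemma so_act_eq: "so_act g = psubst (so\<sigma> g)"
  unfolding so_act_def so\<sigma>_def Let_def ..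
lemma gl_act_eq: "gl_act g = psubst (gl\<sigma> g)"
  unfolding gl_act_def gl\<sigma>_def ..
lemma mu_star_eq: "mu_star = psubst mu\<sigma>"
  unfolding mu_star_def mu\<sigma>_def ..

lemma lt3: "(i::nat) < 3 \<longleftrightarrow> i = 0 \<or> i = 1 \<or> i = 2" by auto

lemma sum3: "(\<Sum>l<(3::nat). f l) = f 0 + f 1 + (f 2 :: 'a::comm_monoid_add)"
  by (simp add: numeral_3_eq_3 numeral_2_eq_2 lessThan_Suc add.commute add.left_commute)

lemma mult3s:
  assumes "A \<in> carrier_mat 3 3" "B \<in> carrier_mat 3 3" "i < 3" "j < 3"
  shows "(A * B) $$ (i,j) = (\<Sum>l<3. A $$ (i,l) * B $$ (l,j))"
proof -
  have "(A * B) $$ (i,j) = (\<Sum>l\<in>{0..<3}. row A i $ l * col B j $ l)"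
    using assms by (simp add: scalar_prod_def)
  also have "\<dots> = (\<Sum>l<3. A $$ (i,l) * B $$ (l,j))"
    using assms by (auto simp: atLeast0LessThan intro!: sum.cong)
  finally show ?thesis .
qed

lemma mult3:
  assumes "A \<in> carrier_mat 3 3" "B \<in> carrier_mat 3 3" "i < 3" "j < 3"
  shows "(A * B) $$ (i,j) = A $$ (i,0) * B $$ (0,j) + A $$ (i,1) * B $$ (1,j) + A $$ (i,2) * B $$ (2,j)"
  using mult3s[OF assms] by (simp add: sum3)

lemma gen_skew_carrier[simp]: "gen_skew k \<in> carrier_mat 3 3" by (simp add: gen_skew_def)
lemma gen_Z_carrier[simp]: "gen_Z \<in> carrier_mat 3 3" by (simp add: gen_Z_def)

lemma gen_skew_entry: "i < 3 \<Longrightarrow> j < 3 \<Longrightarrow> gen_skew k $$ (i,j) =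
  (if i < j then PVar (TV k i j) else if j < i then - PVar (TV k j i) else 0)"
  by (simp add: gen_skew_def)
lemma gen_Z_entry: "i < 3 \<Longrightarrow> j < 3 \<Longrightarrow> gen_Z $$ (i,j) = PVar (ZV i j)"
  by (simp add: gen_Z_def)

lemma skew_explicit:
  "gen_skew k $$ (0,0) = 0" "gen_skew k $$ (1,1) = 0" "gen_skew k $$ (2,2) = 0"
  "gen_skew k $$ (0,1) = PVar (TV k 0 1)" "gen_skew k $$ (0,2) = PVar (TV k 0 2)" "gen_skew k $$ (1,2) = PVar (TV k 1 2)"
  "gen_skew k $$ (1,0) = - PVar (TV k 0 1)" "gen_skew k $$ (2,0) = - PVar (TV k 0 2)" "gen_skew k $$ (2,1) = - PVar (TV k 1 2)"
  by (simp_all add: gen_skew_entry)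

lemma triple3:
  assumes "H \<in> carrier_mat 3 3" "A \<in> carrier_mat 3 3" "i < 3" "j < 3"
  shows "(transpose_mat H * A * H) $$ (i,j) = (\<Sum>a<3. \<Sum>b<3. H $$ (a,i) * A $$ (a,b) * H $$ (b,j))"
proof -
  have c: "transpose_mat H * A \<in> carrier_mat 3 3" using assms by simp
  have "(transpose_mat H * A * H) $$ (i,j) = (\<Sum>b<3. (transpose_mat H * A) $$ (i,b) * H $$ (b,j))"
    by (rule mult3s[OF c assms(1,3,4)])
  also have "\<dots> = (\<Sum>b<3. (\<Sum>a<3. H $$ (a,i) * A $$ (a,b)) * H $$ (b,j))"
  proof (intro sum.cong refl)
    fix b assume b: "b \<in> {..<(3::nat)}"
    have "(transpose_mat H * A) $$ (i,b) = (\<Sum>l<3. transpose_mat H $$ (i,l) * A $$ (l,b))"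
      using assms b by (intro mult3s) auto
    also have "\<dots> = (\<Sum>a<3. H $$ (a,i) * A $$ (a,b))"
      using assms by (intro sum.cong refl) auto
    finally show "(transpose_mat H * A) $$ (i,b) * H $$ (b,j) = (\<Sum>a<3. H $$ (a,i) * A $$ (a,b)) * H $$ (b,j)" by simp
  qed
  also have "\<dots> = (\<Sum>a<3. \<Sum>b<3. H $$ (a,i) * A $$ (a,b) * H $$ (b,j))"
    unfolding sum_distrib_right by (rule sum.swap)
  finally show ?thesis .
qed


declare index_mult_mat(1)[simp del]

lemma gen_dims[simp]: "dim_row (gen_skew k) = 3" "dim_col (gen_skew k) = 3" "dim_row gen_Z = 3" "dim_col gen_Z = 3"
  by (simp_all add: gen_skew_def gen_Z_def)

lemma Gm_carrier[simp]: "h \<in> carrier_mat 3 3 \<Longrightarrow> Gm h \<in> carrier_mat 3 3" by simp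

lemma psubst_triple:
  assumes "H \<in> carrier_mat 3 3" "A \<in> carrier_mat 3 3" "i < 3" "j < 3"
  shows "psubst \<sigma> ((transpose_mat (Gm H) * A * Gm H) $$ (i,j)) = (transpose_mat (Gm H) * map_mat (psubst \<sigma>) A * Gm H) $$ (i,j)"
proof -
  have c: "map_mat (psubst \<sigma>) A \<in> carrier_mat 3 3" using assms by simp
  show ?thesis
    unfolding triple3[OF Gm_carrier[OF assms(1)] assms(2-4)] triple3[OF Gm_carrier[OF assms(1)] c assms(3-4)]
    using assms by (simp add: psubst_hom.hom_sum psubst_hom.hom_mult)
qed

lemma psubst_prod2:
  assumes "A \<in> carrier_mat 3 3" "B \<in> carrier_mat 3 3" "i < 3" "j < 3"
  shows "psubst \<sigma> ((A * B) $$ (i,j)) = (map_mat (psubst \<sigma>) A * map_mat (psubst \<sigma>) B) $$ (i,j)"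
proof -
  have c: "map_mat (psubst \<sigma>) A \<in> carrier_mat 3 3" "map_mat (psubst \<sigma>) B \<in> carrier_mat 3 3" using assms by simp_all
  show ?thesis
    unfolding mult3s[OF assms] mult3s[OF c assms(3-4)]
    using assms by (simp add: psubst_hom.hom_sum psubst_hom.hom_mult)
qed

lemma map_fix_skew:
  assumes "\<And>a b. a < b \<Longrightarrow> b < 3 \<Longrightarrow> \<sigma> (TV k a b) = PVar (TV k a b)"
  shows "map_mat (psubst \<sigma>) (gen_skew k) = gen_skew k"
  by (rule eq_matI) (auto simp: gen_skew_entry assms psubst_hom.hom_uminus)

lemma map_fix_Z:
  assumes "\<And>a b. a < 3 \<Longrightarrow> b < 3 \<Longrightarrow> \<sigma> (ZV a b) = PVar (ZV a b)"
  shows "map_mat (psubst \<sigma>) gen_Z = gen_Z"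
  by (rule eq_matI) (auto simp: gen_Z_entry assms)

lemma map_so_skew:
  assumes "H \<in> carrier_mat 3 3"
  shows "map_mat (psubst (so\<sigma> H)) (gen_skew k) = transpose_mat (Gm H) * gen_skew k * Gm H"
proof (rule eq_matI)
  fix a b assume ab: "a < dim_row (transpose_mat (Gm H) * gen_skew k * Gm H)" "b < dim_col (transpose_mat (Gm H) * gen_skew k * Gm H)"
  then have "a < 3" "b < 3" using assms by auto
  then show "map_mat (psubst (so\<sigma> H)) (gen_skew k) $$ (a, b) = (transpose_mat (Gm H) * gen_skew k * Gm H) $$ (a, b)"
    unfolding triple3[OF Gm_carrier[OF assms] gen_skew_carrier \<open>a < 3\<close> \<open>b < 3\<close>]
    using assms lt3[of a] lt3[of b]
    by (auto simp: sum3 gen_skew_entry so\<sigma>_def triple3 psubst_hom.hom_uminus algebra_simps)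
qed (use assms in auto)

lemma map_so_Z:
  assumes "H \<in> carrier_mat 3 3"
  shows "map_mat (psubst (so\<sigma> H)) gen_Z = transpose_mat (Gm H) * gen_Z * Gm H"
proof (rule eq_matI)
  fix a b assume ab: "a < dim_row (transpose_mat (Gm H) * gen_Z * Gm H)" "b < dim_col (transpose_mat (Gm H) * gen_Z * Gm H)"
  then have "a < 3" "b < 3" using assms by auto
  then show "map_mat (psubst (so\<sigma> H)) gen_Z $$ (a, b) = (transpose_mat (Gm H) * gen_Z * Gm H) $$ (a, b)"
    by (simp add: gen_Z_entry so\<sigma>_def)
qed (use assms in auto)

lemma map_mu_Z: "map_mat (psubst mu\<sigma>) gen_Z = gen_skew 3 * gen_skew 4"
  by (rule eq_matI) (auto simp: gen_Z_entry mu\<sigma>_def)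

lemma SO3_carrier: "h \<in> SO3 \<Longrightarrow> h \<in> carrier_mat 3 3" by (simp add: SO3_def)
lemma GL3_carrier: "h \<in> GL3 \<Longrightarrow> h \<in> carrier_mat 3 3" by (simp add: GL3_def)

lemma transpose_Gm: "transpose_mat (Gm h) = Gm (transpose_mat h)"
  by (rule eq_matI) auto

lemma SO3_HHt:
  assumes "(h :: 'k::field mat) \<in> SO3"
  shows "Gm h * transpose_mat (Gm h) = 1\<^sub>m 3"
proof -
  have c: "h \<in> carrier_mat 3 3" and tt: "transpose_mat h * h = 1\<^sub>m 3" using assms by (auto simp: SO3_def)
  have "h * transpose_mat h = 1\<^sub>m 3"
    by (rule mat_mult_left_right_inverse[OF _ c tt]) (use c in simp)
  then have "Gm (h * transpose_mat h) = 1\<^sub>m 3" by (simp add: PConst_hom.mat_hom_one)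
  then show ?thesis using c by (simp add: PConst_hom.mat_hom_mult[of h 3 3 "transpose_mat h" 3] transpose_Gm)
qed


lemma VTZ_cases:
  assumes "v \<in> Tvars 3 \<union> Zvars"
  obtains k i j where "v = TV k i j" "k < 3" "i < j" "j < 3" | i j where "v = ZV i j" "i < 3" "j < 3"
  using assms unfolding Tvars_def Zvars_def by blast

lemma T5_cases:
  assumes "v \<in> Tvars 5"
  obtains k i j where "v = TV k i j" "k < 5" "i < j" "j < 3"
  using assms unfolding Tvars_def by blast

lemma TV_in_Tvars[simp]: "TV k i j \<in> Tvars p \<longleftrightarrow> k < p \<and> i < j \<and> j < 3"
  by (simp add: Tvars_def)
lemma ZV_in_Tvars[simp]: "ZV i j \<notin> Tvars p" by (simp add: Tvars_def)
lemma ZV_in_Zvars[simp]: "ZV i j \<in> Zvars \<longleftrightarrow> i < 3 \<and> j < 3" by (simp add: Zvars_def)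
lemma TV_in_Zvars[simp]: "TV k i j \<notin> Zvars" by (simp add: Zvars_def)
lemma TV_in_comp[simp]: "TV k i j \<in> comp_vars l \<longleftrightarrow> k = l \<and> i < j \<and> j < 3" by (auto simp: comp_vars_def)
lemma ZV_in_comp[simp]: "ZV i j \<notin> comp_vars l" by (simp add: comp_vars_def)

lemma skew_poly_in: "a < 3 \<Longrightarrow> b < 3 \<Longrightarrow> poly_in (comp_vars k) (gen_skew k $$ (a,b))"
  by (auto simp: gen_skew_entry intro!: poly_in_PVar poly_in_uminus)
lemma hdeg_PVar_in': "v \<in> S \<Longrightarrow> hdeg S (Suc 0) (PVar v)"
  using hdeg_PVar_in by simp
lemma skew_hdeg1: assumes "a < 3" "b < 3" "comp_vars k \<subseteq> S" shows "hdeg S 1 (gen_skew k $$ (a,b))"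
proof -
  have "\<And>a b. a < b \<Longrightarrow> b < 3 \<Longrightarrow> TV k a b \<in> S" using assms(3) by auto
  then show ?thesis using assms(1,2) by (auto simp: gen_skew_entry intro!: hdeg_PVar_in' hdeg_uminus)
qed
lemma skew_hdeg0: assumes "a < 3" "b < 3" "comp_vars k \<inter> S = {}" shows "hdeg S 0 (gen_skew k $$ (a,b))"
proof -
  have "\<And>a b. a < b \<Longrightarrow> b < 3 \<Longrightarrow> TV k a b \<notin> S" using assms(3) by (auto simp: disjoint_iff)
  then show ?thesis using assms(1,2) by (auto simp: gen_skew_entry intro!: hdeg_PVar_notin hdeg_uminus)
qed

lemma hdeg_sandwich: "hdeg S d X \<Longrightarrow> hdeg S d (PConst x * X * PConst y)"
  using hdeg_mult[OF hdeg_mult[OF hdeg_PConst[of S x]], of d X 0 "PConst y"] by simp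
lemma poly_in_sandwich: "poly_in V X \<Longrightarrow> poly_in V (PConst x * X * PConst y)"
  by (intro poly_in_mult poly_in_PConst)

lemma hdeg_triple:
  assumes "H \<in> carrier_mat 3 3" "A \<in> carrier_mat 3 3" "i < 3" "j < 3"
    "\<And>a b. a < 3 \<Longrightarrow> b < 3 \<Longrightarrow> hdeg S d (A $$ (a,b))"
  shows "hdeg S d ((transpose_mat (Gm H) * A * Gm H) $$ (i,j))"
  unfolding triple3[OF Gm_carrier[OF assms(1)] assms(2-4)]
  using assms by (auto intro!: hdeg_sum hdeg_sandwich)

lemma poly_in_triple:
  assumes "H \<in> carrier_mat 3 3" "A \<in> carrier_mat 3 3" "i < 3" "j < 3"
    "\<And>a b. a < 3 \<Longrightarrow> b < 3 \<Longrightarrow> poly_in V (A $$ (a,b))"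
  shows "poly_in V ((transpose_mat (Gm H) * A * Gm H) $$ (i,j))"
  unfolding triple3[OF Gm_carrier[OF assms(1)] assms(2-4)]
  using assms by (auto intro!: poly_in_sum poly_in_sandwich)

lemma hdeg_prod2:
  assumes "A \<in> carrier_mat 3 3" "B \<in> carrier_mat 3 3" "i < 3" "j < 3"
    "\<And>a b. a < 3 \<Longrightarrow> b < 3 \<Longrightarrow> hdeg S d1 (A $$ (a,b))"
    "\<And>a b. a < 3 \<Longrightarrow> b < 3 \<Longrightarrow> hdeg S d2 (B $$ (a,b))"
  shows "hdeg S (d1 + d2) ((A * B) $$ (i,j))"
  unfolding mult3s[OF assms(1-4)]
  using assms by (auto intro!: hdeg_sum hdeg_mult)

lemma poly_in_prod2:
  assumes "A \<in> carrier_mat 3 3" "B \<in> carrier_mat 3 3" "i < 3" "j < 3"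
    "\<And>a b. a < 3 \<Longrightarrow> b < 3 \<Longrightarrow> poly_in V (A $$ (a,b))"
    "\<And>a b. a < 3 \<Longrightarrow> b < 3 \<Longrightarrow> poly_in V (B $$ (a,b))"
  shows "poly_in V ((A * B) $$ (i,j))"
  unfolding mult3s[OF assms(1-4)]
  using assms by (auto intro!: poly_in_sum poly_in_mult)

lemma comp_sub_T: "k < p \<Longrightarrow> comp_vars k \<subseteq> Tvars p" by (auto simp: comp_vars_def)
lemma comp_Z_disj: "comp_vars k \<inter> Zvars = {}" by (auto simp: comp_vars_def)
lemma comp_comp_disj: "k \<noteq> l \<Longrightarrow> comp_vars k \<inter> comp_vars l = {}" by (auto simp: comp_vars_def)

lemma F1:
  assumes "H \<in> carrier_mat 3 3" "v \<in> Tvars 3 \<union> Zvars"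
  shows "poly_in (Tvars 3 \<union> Zvars) (so\<sigma> H v) \<and> hdeg Zvars (if v \<in> Zvars then 1 else 0) (so\<sigma> H v)"
  using assms(2)
proof (cases rule: VTZ_cases)
  case (1 k i j)
  have "poly_in (comp_vars k) (so\<sigma> H v)"
    unfolding 1 so\<sigma>_def using 1 by (auto intro!: poly_in_triple assms(1) skew_poly_in)
  then have "poly_in (Tvars 3 \<union> Zvars) (so\<sigma> H v)"
    by (rule poly_in_mono) (use comp_sub_T[OF \<open>k < 3\<close>] in auto)
  moreover have "hdeg Zvars 0 (so\<sigma> H v)"
    unfolding 1 so\<sigma>_def using 1 by (auto intro!: hdeg_triple assms(1) skew_hdeg0 comp_Z_disj)
  ultimately show ?thesis using 1 by simp
next
  case (2 i j)
  have "poly_in (Tvars 3 \<union> Zvars) (so\<sigma> H v)"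
    unfolding 2 so\<sigma>_def using 2 by (auto intro!: poly_in_triple assms(1) poly_in_PVar simp: gen_Z_entry)
  moreover have "hdeg Zvars 1 (so\<sigma> H v)"
    unfolding 2 so\<sigma>_def using 2 by (auto intro!: hdeg_triple assms(1) hdeg_PVar_in' simp: gen_Z_entry)
  ultimately show ?thesis using 2 by simp
qed

lemma T3_sub_T5: "Tvars 3 \<subseteq> Tvars 5" by (auto simp: Tvars_def)

lemma gl_TV_poly_in: "i < j \<Longrightarrow> j < 3 \<Longrightarrow> poly_in (Tvars 3) (\<Sum>l<3. PConst (g $$ (l,k)) * PVar (TV l i j))"
  by (auto intro!: poly_in_sum poly_in_mult poly_in_PVar)
lemma gl_TV_hdeg: "(\<And>l. l < 3 \<Longrightarrow> TV l i j \<notin> S) \<Longrightarrow> hdeg S 0 (\<Sum>l<3. PConst (g $$ (l,k)) * PVar (TV l i j))"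
  by (auto intro!: hdeg_sum hdeg_PConst_mult hdeg_PVar_notin)

lemma F3:
  assumes "v \<in> Tvars 3 \<union> Zvars"
  shows "poly_in (Tvars 3 \<union> Zvars) (gl\<sigma> g v) \<and> hdeg Zvars (if v \<in> Zvars then 1 else 0) (gl\<sigma> g v)"
  using assms
proof (cases rule: VTZ_cases)
  case (1 k i j)
  then show ?thesis
    using gl_TV_poly_in[of i j g k] gl_TV_hdeg[of i j Zvars g k]
    by (auto simp: gl\<sigma>_def intro: poly_in_mono)
next
  case (2 i j)
  then show ?thesis by (auto simp: gl\<sigma>_def intro!: poly_in_PVar hdeg_PVar_in')
qed

lemma F4:
  assumes "v \<in> Tvars 5" "S = comp_vars 3 \<or> S = comp_vars 4"
  shows "poly_in (Tvars 5) (gl\<sigma> g v) \<and> hdeg S (if v \<in> S then 1 else 0) (gl\<sigma> g v)"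
  using assms(1)
proof (cases rule: T5_cases)
  case (1 k i j)
  show ?thesis
  proof (cases "k < 3")
    case True
    then show ?thesis
      using 1 gl_TV_poly_in[of i j g k] gl_TV_hdeg[of i j S g k] assms(2) T3_sub_T5
      by (auto simp: gl\<sigma>_def intro: poly_in_mono)
  next
    case False
    then show ?thesis using 1 assms by (auto simp: gl\<sigma>_def intro!: poly_in_PVar hdeg_PVar_in' hdeg_PVar_notin)
  qed
qed

lemma F7:
  assumes "v \<in> Tvars 3 \<union> Zvars"
  shows "poly_in (Tvars 5) (mu\<sigma> v) \<and> hdeg (comp_vars 3) (if v \<in> Zvars then 1 else 0) (mu\<sigma> v)
     \<and> hdeg (comp_vars 4) (if v \<in> Zvars then 1 else 0) (mu\<sigma> v)"
  using assms
proof (cases rule: VTZ_cases)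
  case (1 k i j)
  then show ?thesis by (auto simp: mu\<sigma>_def intro!: poly_in_PVar hdeg_PVar_notin)
next
  case (2 i j)
  have e: "mu\<sigma> v = (gen_skew 3 * gen_skew 4) $$ (i,j)" by (simp add: 2 mu\<sigma>_def)
  have "poly_in (Tvars 5) (mu\<sigma> v)"
    unfolding e using 2
    by (auto intro!: poly_in_prod2 intro: poly_in_mono[OF skew_poly_in comp_sub_T])
  moreover have "hdeg (comp_vars 3) (1 + 0) (mu\<sigma> v)"
    unfolding e using 2
    by (intro hdeg_prod2 gen_skew_carrier skew_hdeg1 skew_hdeg0 comp_comp_disj) auto
  moreover have "hdeg (comp_vars 4) (0 + 1) (mu\<sigma> v)"
    unfolding e using 2
    by (intro hdeg_prod2 gen_skew_carrier skew_hdeg1 skew_hdeg0 comp_comp_disj) auto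
  ultimately show ?thesis using 2 by simp
qed


lemma HHt_assoc:
  assumes "(h :: 'k::field mat) \<in> SO3" "X \<in> carrier_mat 3 n"
  shows "Gm h * (transpose_mat (Gm h) * X) = X"
proof -
  have c: "h \<in> carrier_mat 3 3" using assms by (simp add: SO3_def)
  have "Gm h * (transpose_mat (Gm h) * X) = (Gm h * transpose_mat (Gm h)) * X"
    using c assms(2) by (simp add: assoc_mult_mat)
  also have "\<dots> = X" using SO3_HHt[OF assms(1)] assms(2) by simp
  finally show ?thesis .
qed

lemma F2:
  assumes "(h :: 'k::field mat) \<in> SO3" "v \<in> Tvars 3 \<union> Zvars"
  shows "psubst mu\<sigma> (so\<sigma> h v) = psubst (so\<sigma> h) (mu\<sigma> v)"
  using assms(2)
proof (cases rule: VTZ_cases)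
  case (1 k i j)
  have c: "h \<in> carrier_mat 3 3" using assms by (simp add: SO3_def)
  have fx: "map_mat (psubst mu\<sigma>) (gen_skew k) = gen_skew k"
    by (rule map_fix_skew) (use 1 in \<open>simp add: mu\<sigma>_def\<close>)
  show ?thesis
    using 1 psubst_triple[OF c gen_skew_carrier, of i j mu\<sigma> k] by (simp add: so\<sigma>_def mu\<sigma>_def fx)
next
  case (2 i j)
  have c: "h \<in> carrier_mat 3 3" using assms by (simp add: SO3_def)
  have "psubst mu\<sigma> (so\<sigma> h v) = (transpose_mat (Gm h) * (gen_skew 3 * gen_skew 4) * Gm h) $$ (i,j)"
    using 2 psubst_triple[OF c gen_Z_carrier, of i j mu\<sigma>] by (simp add: so\<sigma>_def map_mu_Z)
  also have "\<dots> = ((transpose_mat (Gm h) * gen_skew 3 * Gm h) * (transpose_mat (Gm h) * gen_skew 4 * Gm h)) $$ (i,j)"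
  proof -
    let ?Ht = "transpose_mat (Gm h)" and ?G = "Gm h" and ?S3 = "gen_skew 3 :: (var,'k) mpoly mat" and ?S4 = "gen_skew 4 :: (var,'k) mpoly mat"
    have C: "?Ht \<in> carrier_mat 3 3" "?G \<in> carrier_mat 3 3" "?S3 \<in> carrier_mat 3 3" "?S4 \<in> carrier_mat 3 3"
      using c by auto
    have a1: "?Ht * ?S3 * ?G * (?Ht * ?S4 * ?G) = (?Ht * ?S3) * (?G * (?Ht * ?S4 * ?G))"
      by (rule assoc_mult_mat) (use C in auto)
    have a2: "?Ht * ?S4 * ?G = ?Ht * (?S4 * ?G)"
      by (rule assoc_mult_mat) (use C in auto)
    have "?Ht * ?S3 * ?G * (?Ht * ?S4 * ?G) = (?Ht * ?S3) * (?G * (?Ht * (?S4 * ?G)))"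
      using a1 a2 by simp
    also have "?G * (?Ht * (?S4 * ?G)) = ?S4 * ?G"
      by (rule HHt_assoc[OF assms(1), of _ 3]) (use C in \<open>auto intro!: mult_carrier_mat\<close>)
    also have "(?Ht * ?S3) * (?S4 * ?G) = ?Ht * (?S3 * ?S4) * ?G"
    proof -
      have "(?Ht * ?S3) * (?S4 * ?G) = (?Ht * ?S3 * ?S4) * ?G"
        by (rule assoc_mult_mat[symmetric]) (use C in auto)
      also have "?Ht * ?S3 * ?S4 = ?Ht * (?S3 * ?S4)"
        by (rule assoc_mult_mat) (use C in auto)
      finally show ?thesis .
    qed
    finally show ?thesis by simp
  qed
  also have "\<dots> = psubst (so\<sigma> h) ((gen_skew 3 * gen_skew 4) $$ (i,j))"
    using 2 by (simp add: psubst_prod2 map_so_skew[OF c])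
  also have "\<dots> = psubst (so\<sigma> h) (mu\<sigma> v)" using 2 by (simp add: mu\<sigma>_def)
  finally show ?thesis .
qed

lemma F6:
  assumes "v \<in> Tvars 3 \<union> Zvars"
  shows "psubst mu\<sigma> (gl\<sigma> g v) = psubst (gl\<sigma> g) (mu\<sigma> v)"
  using assms
proof (cases rule: VTZ_cases)
  case (1 k i j)
  then show ?thesis by (simp add: gl\<sigma>_def mu\<sigma>_def psubst_hom.hom_sum psubst_hom.hom_mult)
next
  case (2 i j)
  have fx: "map_mat (psubst (gl\<sigma> g)) (gen_skew k) = gen_skew k" if "k \<ge> 3" for k
    by (rule map_fix_skew) (use that in \<open>simp add: gl\<sigma>_def\<close>)
  show ?thesis using 2 by (simp add: gl\<sigma>_def mu\<sigma>_def psubst_prod2 fx)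
qed

lemma gl_skew_entry:
  assumes "a < 3" "b < 3" "k < 3"
  shows "psubst (gl\<sigma> g) (gen_skew k $$ (a,b)) = (\<Sum>l<3. PConst (g $$ (l,k)) * gen_skew l $$ (a,b))"
  using assms by (auto simp: gen_skew_entry gl\<sigma>_def psubst_hom.hom_uminus sum_negf)

lemma F5:
  assumes "g \<in> carrier_mat 3 3" "h \<in> carrier_mat 3 3" "v \<in> Tvars 5 \<union> Zvars"
  shows "psubst (so\<sigma> h) (gl\<sigma> g v) = psubst (gl\<sigma> g) (so\<sigma> h v)"
proof -
  consider (T) k i j where "v = TV k i j" "k < 5" "i < j" "j < 3" | (Z) i j where "v = ZV i j" "i < 3" "j < 3"
    using assms(3) unfolding Tvars_def Zvars_def by blast
  then show ?thesis
  proof cases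
    case (T k i j)
    show ?thesis
    proof (cases "k < 3")
      case True
      have "psubst (gl\<sigma> g) (so\<sigma> h v) = (transpose_mat (Gm h) * map_mat (psubst (gl\<sigma> g)) (gen_skew k) * Gm h) $$ (i,j)"
        using T psubst_triple[OF assms(2) gen_skew_carrier, of i j "gl\<sigma> g" k] by (simp add: so\<sigma>_def)
      also have "\<dots> = (\<Sum>a<3. \<Sum>b<3. PConst (h $$ (a,i)) * (\<Sum>l<3. PConst (g $$ (l,k)) * gen_skew l $$ (a,b)) * PConst (h $$ (b,j)))"
        using T True assms by (subst triple3) (auto simp: gl_skew_entry)
      also have "\<dots> = (\<Sum>l<3. PConst (g $$ (l,k)) * (\<Sum>a<3. \<Sum>b<3. PConst (h $$ (a,i)) * gen_skew l $$ (a,b) * PConst (h $$ (b,j))))"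
        by (simp add: sum3 algebra_simps)
      also have "\<dots> = psubst (so\<sigma> h) (gl\<sigma> g v)"
        using T True assms by (simp add: gl\<sigma>_def psubst_hom.hom_sum psubst_hom.hom_mult so\<sigma>_def triple3)
      finally show ?thesis by simp
    next
      case False
      have fx: "map_mat (psubst (gl\<sigma> g)) (gen_skew k) = gen_skew k"
        by (rule map_fix_skew) (use False in \<open>simp add: gl\<sigma>_def\<close>)
      show ?thesis
        using T False psubst_triple[OF assms(2) gen_skew_carrier, of i j "gl\<sigma> g" k]
        by (simp add: so\<sigma>_def gl\<sigma>_def fx)
    qed
  next
    case (Z i j)
    have fx: "map_mat (psubst (gl\<sigma> g)) gen_Z = gen_Z"
      by (rule map_fix_Z) (simp add: gl\<sigma>_def)
    show ?thesis
      using Z psubst_triple[OF assms(2) gen_Z_carrier, of i j "gl\<sigma> g"]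
      by (simp add: so\<sigma>_def gl\<sigma>_def fx)
  qed
qed


lemma keys_add_nat: "Poly_Mapping.keys (f + g :: 'a \<Rightarrow>\<^sub>0 nat) = Poly_Mapping.keys f \<union> Poly_Mapping.keys g"
  by (auto simp: in_keys_iff lookup_add)

lemma lookup_minus_nat: "Poly_Mapping.lookup (f - g :: 'a \<Rightarrow>\<^sub>0 nat) k = Poly_Mapping.lookup f k - Poly_Mapping.lookup g k"
  by (rule lookup_minus)

lemma deg1_split:
  assumes "deg_in S m = 1"
  obtains z where "z \<in> S" "m = (m - Poly_Mapping.single z 1) + Poly_Mapping.single z 1"
    "Poly_Mapping.keys (m - Poly_Mapping.single z 1) \<inter> S = {}"
    "Poly_Mapping.keys (m - Poly_Mapping.single z 1) = Poly_Mapping.keys m - {z}"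
proof -
  let ?K = "Poly_Mapping.keys m \<inter> S"
  have fin: "finite ?K" by simp
  have sum1: "(\<Sum>v\<in>?K. Poly_Mapping.lookup m v) = 1" using assms by (simp add: deg_in_def)
  then have "?K \<noteq> {}" by auto
  then obtain z where z: "z \<in> ?K" by blast
  have split: "(\<Sum>v\<in>?K. Poly_Mapping.lookup m v) = Poly_Mapping.lookup m z + (\<Sum>v\<in>?K - {z}. Poly_Mapping.lookup m v)"
    using fin z by (rule sum.remove)
  have mz: "Poly_Mapping.lookup m z \<ge> 1" using z by (simp add: in_keys_iff)
  have mz1: "Poly_Mapping.lookup m z = 1" and rest: "(\<Sum>v\<in>?K - {z}. Poly_Mapping.lookup m v) = 0"
    using sum1 split mz by linarith+
  have other: "Poly_Mapping.lookup m v = 0" if "v \<in> S" "v \<noteq> z" for v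
  proof (rule ccontr)
    assume "Poly_Mapping.lookup m v \<noteq> 0"
    then have "v \<in> ?K - {z}" using that by (simp add: in_keys_iff)
    then show False using rest fin \<open>Poly_Mapping.lookup m v \<noteq> 0\<close> by simp
  qed
  let ?m' = "m - Poly_Mapping.single z 1"
  have l': "Poly_Mapping.lookup ?m' v = (if v = z then 0 else Poly_Mapping.lookup m v)" for v
    by (simp add: lookup_minus_nat lookup_single mz1 when_def)
  show ?thesis
  proof
    show "z \<in> S" using z by simp
    show "m = ?m' + Poly_Mapping.single z 1"
      by (rule poly_mapping_eqI) (use mz in \<open>auto simp: lookup_add lookup_minus_nat lookup_single when_def\<close>)
    show "Poly_Mapping.keys ?m' \<inter> S = {}"
      using other mz1 by (auto simp: in_keys_iff lookup_minus_nat lookup_single when_def split: if_splits)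
    show "Poly_Mapping.keys ?m' = Poly_Mapping.keys m - {z}"
      using mz1 by (auto simp: in_keys_iff lookup_minus_nat lookup_single when_def split: if_splits)
  qed
qed

lemma TZ_mon_split:
  assumes "Poly_Mapping.keys m \<subseteq> Tvars 3 \<union> Zvars" "deg_in Zvars m = 1"
  obtains m' i j where "m = m' + Poly_Mapping.single (ZV i j) 1" "i < 3" "j < 3" "Poly_Mapping.keys m' \<subseteq> Tvars 3"
proof -
  obtain z where z: "z \<in> Zvars" "m = (m - Poly_Mapping.single z 1) + Poly_Mapping.single z 1"
    "Poly_Mapping.keys (m - Poly_Mapping.single z 1) \<inter> Zvars = {}"
    "Poly_Mapping.keys (m - Poly_Mapping.single z 1) = Poly_Mapping.keys m - {z}"
    using deg1_split[OF assms(2)] by blast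
  obtain i j where ij: "z = ZV i j" "i < 3" "j < 3" using z(1) unfolding Zvars_def by blast
  have "Poly_Mapping.keys (m - Poly_Mapping.single z 1) \<subseteq> Tvars 3" using z(3,4) assms(1) by blast
  then show ?thesis using that z(2) ij by blast
qed

lemma T5_minus_comp: "Tvars 5 - comp_vars 3 - comp_vars 4 = Tvars 3"
  by (auto simp: Tvars_def comp_vars_def)

lemma T5_mon_split:
  assumes "Poly_Mapping.keys m \<subseteq> Tvars 5" "deg_in (comp_vars 3) m = 1" "deg_in (comp_vars 4) m = 1"
  obtains m' x y where "m = m' + Poly_Mapping.single x 1 + Poly_Mapping.single y 1"
    "x \<in> comp_vars 3" "y \<in> comp_vars 4" "Poly_Mapping.keys m' \<subseteq> Tvars 3"
proof -
  obtain x where x: "x \<in> comp_vars 3" "m = (m - Poly_Mapping.single x 1) + Poly_Mapping.single x 1"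
    "Poly_Mapping.keys (m - Poly_Mapping.single x 1) \<inter> comp_vars 3 = {}"
    "Poly_Mapping.keys (m - Poly_Mapping.single x 1) = Poly_Mapping.keys m - {x}"
    using deg1_split[OF assms(2)] by blast
  let ?m1 = "m - Poly_Mapping.single x 1"
  have "deg_in (comp_vars 4) m = deg_in (comp_vars 4) ?m1 + deg_in (comp_vars 4) (Poly_Mapping.single x 1)"
    using x(2) deg_in_add by metis
  moreover have "x \<notin> comp_vars 4" using x(1) comp_comp_disj[of 3 4] by auto
  ultimately have d: "deg_in (comp_vars 4) ?m1 = 1" using assms(3) by (simp add: deg_in_single)
  obtain y where y: "y \<in> comp_vars 4" "?m1 = (?m1 - Poly_Mapping.single y 1) + Poly_Mapping.single y 1"
    "Poly_Mapping.keys (?m1 - Poly_Mapping.single y 1) \<inter> comp_vars 4 = {}"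
    "Poly_Mapping.keys (?m1 - Poly_Mapping.single y 1) = Poly_Mapping.keys ?m1 - {y}"
    using deg1_split[OF d] by blast
  let ?m' = "?m1 - Poly_Mapping.single y 1"
  have "m = ?m' + Poly_Mapping.single y 1 + Poly_Mapping.single x 1" using x(2) y(2) by simp
  then have e: "m = ?m' + Poly_Mapping.single x 1 + Poly_Mapping.single y 1" by (simp add: add_ac)
  have "Poly_Mapping.keys ?m' \<subseteq> Tvars 5 - comp_vars 3 - comp_vars 4"
    using y(3,4) x(3,4) assms(1) by blast
  then have "Poly_Mapping.keys ?m' \<subseteq> Tvars 3" using T5_minus_comp by simp
  then show ?thesis using that e x(1) y(1) by blast
qed


declare One_nat_def [simp del]

abbreviation Zp :: "nat \<Rightarrow> nat \<Rightarrow> (var,'k::comm_ring_1) mpoly" where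
  "Zp i j \<equiv> PVar (ZV i j)"

definition Lf :: "nat \<Rightarrow> nat \<Rightarrow> nat \<Rightarrow> nat \<Rightarrow> (var,'k::field_char_0) mpoly" where
 "Lf a b c d =
  (if (a,b) = (0,1) \<and> (c,d) = (0,1) then PConst (1/2) * (Zp 2 2 - Zp 0 0 - Zp 1 1)
   else if (a,b) = (0,2) \<and> (c,d) = (0,2) then PConst (1/2) * (Zp 1 1 - Zp 0 0 - Zp 2 2)
   else if (a,b) = (1,2) \<and> (c,d) = (1,2) then PConst (1/2) * (Zp 0 0 - Zp 1 1 - Zp 2 2)
   else if (a,b) = (0,1) \<and> (c,d) = (0,2) then - Zp 1 2
   else if (a,b) = (0,1) \<and> (c,d) = (1,2) then Zp 0 2
   else if (a,b) = (0,2) \<and> (c,d) = (0,1) then - Zp 2 1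
   else if (a,b) = (0,2) \<and> (c,d) = (1,2) then - Zp 0 1
   else if (a,b) = (1,2) \<and> (c,d) = (0,1) then Zp 2 0
   else if (a,b) = (1,2) \<and> (c,d) = (0,2) then - Zp 1 0
   else 0)"

definition Lfv :: "var \<Rightarrow> var \<Rightarrow> (var,'k::field_char_0) mpoly" where
  "Lfv x y = (case x of TV _ a b \<Rightarrow> (case y of TV _ c d \<Rightarrow> Lf a b c d | _ \<Rightarrow> 0) | _ \<Rightarrow> 0)"

definition Nmon :: "(var \<Rightarrow>\<^sub>0 nat) \<Rightarrow> (var,'k::field_char_0) mpoly" where
  "Nmon m = (\<Sum>x\<in>Poly_Mapping.keys m \<inter> comp_vars 3. \<Sum>y\<in>Poly_Mapping.keys m \<inter> comp_vars 4.
              Poly_Mapping.single (m - Poly_Mapping.single x 1 - Poly_Mapping.single y 1) 1 * Lfv x y)"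

definition nu :: "(var,'k::field_char_0) mpoly \<Rightarrow> (var,'k) mpoly" where
  "nu = lin Nmon"

lemma half_intro: "E = Y + Y \<Longrightarrow> PConst (1/2) * E = (Y :: (var,'k::field_char_0) mpoly)"
proof -
  assume "E = Y + Y"
  then have "PConst (1/2) * E = (PConst (1/2) + PConst (1/2)) * Y" by (simp add: algebra_simps)
  also have "PConst (1/2) + PConst (1/2) = (1 :: (var,'k) mpoly)"
    by (simp flip: PConst_add)
  finally show ?thesis by simp
qed

lemma pairs3: "a < b \<Longrightarrow> b < (3::nat) \<Longrightarrow> (a = 0 \<and> b = 1) \<or> (a = 0 \<and> b = 2) \<or> (a = 1 \<and> b = 2)"
  by auto

lemma muZ: "i < 3 \<Longrightarrow> j < 3 \<Longrightarrow> mu\<sigma> (ZV i j) =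
  gen_skew 3 $$ (i,0) * gen_skew 4 $$ (0,j) + gen_skew 3 $$ (i,1) * gen_skew 4 $$ (1,j) + gen_skew 3 $$ (i,2) * gen_skew 4 $$ (2,j)"
  by (simp add: mu\<sigma>_def mult3)

abbreviation Xp :: "nat \<Rightarrow> nat \<Rightarrow> (var,'k::comm_ring_1) mpoly" where "Xp a b \<equiv> PVar (TV 3 a b)"
abbreviation Yp :: "nat \<Rightarrow> nat \<Rightarrow> (var,'k::comm_ring_1) mpoly" where "Yp a b \<equiv> PVar (TV 4 a b)"

lemma muZ_explicit:
  "mu\<sigma> (ZV 0 0) = - (Xp 0 1 * Yp 0 1) - Xp 0 2 * Yp 0 2"
  "mu\<sigma> (ZV 1 1) = - (Xp 0 1 * Yp 0 1) - Xp 1 2 * Yp 1 2"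
  "mu\<sigma> (ZV 2 2) = - (Xp 0 2 * Yp 0 2) - Xp 1 2 * Yp 1 2"
  "mu\<sigma> (ZV 0 1) = - (Xp 0 2 * Yp 1 2)"
  "mu\<sigma> (ZV 0 2) = Xp 0 1 * Yp 1 2"
  "mu\<sigma> (ZV 1 0) = - (Xp 1 2 * Yp 0 2)"
  "mu\<sigma> (ZV 1 2) = - (Xp 0 1 * Yp 0 2)"
  "mu\<sigma> (ZV 2 0) = Xp 1 2 * Yp 0 1"
  "mu\<sigma> (ZV 2 1) = - (Xp 0 2 * Yp 0 1)"
  by (simp_all add: muZ gen_skew_entry)

lemma mu_Lf:
  assumes "a < b" "b < 3" "c < d" "d < 3"
  shows "psubst mu\<sigma> (Lf a b c d) = Xp a b * (Yp c d :: (var,'k::field_char_0) mpoly)"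
proof -
  show ?thesis
  using pairs3[OF assms(1,2)] pairs3[OF assms(3,4)]
  apply (elim disjE conjE)
  apply (simp_all add: Lf_def muZ_explicit psubst_hom.hom_minus psubst_hom.hom_mult psubst_hom.hom_uminus)
  apply (rule half_intro, simp add: algebra_simps)+
  done
qed


declare One_nat_def [simp del]

lemma nu_add: "nu (p + q) = nu p + nu q" by (simp add: nu_def lin_add)
lemma nu_uminus: "nu (- p) = - nu p" by (simp add: nu_def lin_uminus)
lemma nu_diff: "nu (p - q) = nu p - nu q" using nu_add[of p "-q"] by (simp add: nu_uminus)
lemma nu_PConst_mult: "nu (PConst c * p) = PConst c * nu p" by (simp add: nu_def lin_PConst_mult)
lemma nu_sum: "nu (sum f A) = (\<Sum>a\<in>A. nu (f a))" by (simp add: nu_def lin_sum)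
lemma nu_single: "nu (Poly_Mapping.single m 1) = Nmon m" by (simp add: nu_def lin_single)

lemma Nmon_eval:
  assumes "Poly_Mapping.keys m' \<inter> (comp_vars 3 \<union> comp_vars 4) = {}" "x \<in> comp_vars 3" "y \<in> comp_vars 4"
  shows "Nmon (m' + Poly_Mapping.single x 1 + Poly_Mapping.single y 1) = Poly_Mapping.single m' 1 * Lfv x y"
proof -
  let ?M = "m' + Poly_Mapping.single x 1 + Poly_Mapping.single y 1"
  have k: "Poly_Mapping.keys ?M = Poly_Mapping.keys m' \<union> {x} \<union> {y}" by (simp add: keys_add_nat)
  have xy: "x \<notin> comp_vars 4" "y \<notin> comp_vars 3" using assms(2,3) comp_comp_disj[of 3 4] by auto
  have k3: "Poly_Mapping.keys ?M \<inter> comp_vars 3 = {x}" using k assms xy by auto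
  have k4: "Poly_Mapping.keys ?M \<inter> comp_vars 4 = {y}" using k assms xy by auto
  have e: "?M = (m' + Poly_Mapping.single y 1) + Poly_Mapping.single x 1" by (simp add: ac_simps)
  have d: "?M - Poly_Mapping.single x 1 - Poly_Mapping.single y 1 = m'"
    unfolding e by (simp only: add_diff_cancel_right')
  show ?thesis unfolding Nmon_def k3 k4 using d by simp
qed

lemma nu_prod:
  assumes "Poly_Mapping.keys m' \<inter> (comp_vars 3 \<union> comp_vars 4) = {}" "x \<in> comp_vars 3" "y \<in> comp_vars 4"
  shows "nu (Poly_Mapping.single m' 1 * (PVar x * PVar y)) = Poly_Mapping.single m' 1 * Lfv x y"
proof -
  have "Poly_Mapping.single m' 1 * (PVar x * PVar y) =
      (Poly_Mapping.single (m' + Poly_Mapping.single x 1 + Poly_Mapping.single y 1) 1 :: (var,'a) mpoly)"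
    by (simp add: PVar_def mult_single add.assoc)
  then show ?thesis by (simp add: nu_single Nmon_eval[OF assms])
qed

lemma Lfv_TV[simp]: "Lfv (TV k a b) (TV l c d) = Lf a b c d" by (simp add: Lfv_def)

lemma half_mult: "s * (PConst (1/2) * (Y + Y)) = s * (Y :: (var,'k::field_char_0) mpoly)"
  by (simp add: half_intro)

lemma nu_muZ:
  assumes "Poly_Mapping.keys m' \<subseteq> Tvars 3" "i < 3" "j < 3"
  shows "nu (Poly_Mapping.single m' 1 * mu\<sigma> (ZV i j)) = Poly_Mapping.single m' 1 * (Zp i j :: (var,'k::field_char_0) mpoly)"
proof -
  have D: "Poly_Mapping.keys m' \<inter> (comp_vars 3 \<union> comp_vars 4) = {}"
    using assms(1) by (auto simp: Tvars_def comp_vars_def)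
  note np = nu_prod[OF D]
  show ?thesis
    using lt3[of i, THEN iffD1, OF assms(2)] lt3[of j, THEN iffD1, OF assms(3)]
    apply (elim disjE)
    apply (simp_all add: muZ_explicit right_diff_distrib mult_minus_right nu_diff nu_uminus np Lf_def)
    apply (rule trans[OF _ half_mult], simp add: algebra_simps)+
    done
qed

lemma mon_cong: "(\<And>v. v \<in> Poly_Mapping.keys m \<Longrightarrow> \<sigma> v = \<tau> v) \<Longrightarrow> mon \<sigma> m = mon \<tau> m"
  unfolding mon_def by (rule prod.cong) auto

lemma mon_mu_T3: "Poly_Mapping.keys m' \<subseteq> Tvars 3 \<Longrightarrow> mon mu\<sigma> m' = Poly_Mapping.single m' 1"
proof -
  assume a: "Poly_Mapping.keys m' \<subseteq> Tvars 3"
  have "mon mu\<sigma> m' = mon PVar m'"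
    by (rule mon_cong) (use a in \<open>auto simp: mu\<sigma>_def Tvars_def\<close>)
  then show ?thesis by (simp add: mon_PVar)
qed

lemma nu_mu:
  assumes "poly_in (Tvars 3 \<union> Zvars) p" "hdeg Zvars 1 p"
  shows "nu (psubst mu\<sigma> p) = (p :: (var,'k::field_char_0) mpoly)"
proof -
  have "nu (psubst mu\<sigma> p) = (\<Sum>m\<in>Poly_Mapping.keys p. PConst (Poly_Mapping.lookup p m) * nu (mon mu\<sigma> m))"
    by (simp add: psubst_lin lin_def nu_sum nu_PConst_mult)
  also have "\<dots> = (\<Sum>m\<in>Poly_Mapping.keys p. PConst (Poly_Mapping.lookup p m) * Poly_Mapping.single m 1)"
  proof (intro sum.cong refl arg_cong[where f="\<lambda>x. PConst (Poly_Mapping.lookup p _) * x"])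
    fix m assume m: "m \<in> Poly_Mapping.keys p"
    have "Poly_Mapping.keys m \<subseteq> Tvars 3 \<union> Zvars" "deg_in Zvars m = 1"
      using assms m unfolding poly_in_def hdeg_def by auto
    then obtain m' i j where s: "m = m' + Poly_Mapping.single (ZV i j) 1" "i < 3" "j < 3" "Poly_Mapping.keys m' \<subseteq> Tvars 3"
      by (rule TZ_mon_split)
    have "mon mu\<sigma> m = (Poly_Mapping.single m' 1 * mu\<sigma> (ZV i j) :: (var,'k) mpoly)"
      using s by (simp add: mon_add mon_single mon_mu_T3)
    then have "nu (mon mu\<sigma> m :: (var,'k) mpoly) = nu (Poly_Mapping.single m' 1 * mu\<sigma> (ZV i j))"
      by simp
    also have "\<dots> = Poly_Mapping.single m' 1 * Zp i j"
      by (rule nu_muZ[OF s(4) s(2,3)])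
    also have "\<dots> = Poly_Mapping.single m 1"
      using s(1) by (simp add: PVar_def mult_single)
    finally show "nu (mon mu\<sigma> m :: (var,'k) mpoly) = Poly_Mapping.single m 1" .
  qed
  also have "\<dots> = p" by (rule poly_expand[symmetric])
  finally show ?thesis .
qed


declare One_nat_def [simp del]

lemma Lf_props: "poly_in Zvars (Lf a b c d :: (var,'k::field_char_0) mpoly) \<and> hdeg Zvars 1 (Lf a b c d :: (var,'k) mpoly)"
proof -
  have P: "poly_in Zvars (Zp i j :: (var,'k) mpoly)" "hdeg Zvars 1 (Zp i j :: (var,'k) mpoly)" if "i < 3" "j < 3" for i j
    using that by (simp_all add: poly_in_PVar hdeg_PVar_in)
  have Q: "poly_in Zvars (PConst c * (Zp i j - Zp i' j' - Zp i'' j'') :: (var,'k) mpoly)"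
     "hdeg Zvars 1 (PConst c * (Zp i j - Zp i' j' - Zp i'' j'') :: (var,'k) mpoly)"
     if "i < 3" "j < 3" "i' < 3" "j' < 3" "i'' < 3" "j'' < 3" for i j i' j' i'' j'' c
    using P that by (simp_all add: poly_in_mult poly_in_diff hdeg_PConst_mult hdeg_diff)
  have R: "poly_in Zvars (- Zp i j :: (var,'k) mpoly)" "hdeg Zvars 1 (- Zp i j :: (var,'k) mpoly)" if "i < 3" "j < 3" for i j
    using P that by (simp_all add: poly_in_uminus hdeg_uminus)
  show ?thesis unfolding Lf_def by (simp add: P Q R)
qed

lemma hdeg_single0: "Poly_Mapping.keys m \<inter> S = {} \<Longrightarrow> hdeg S 0 (Poly_Mapping.single m c)"
  by (simp add: hdeg_def deg_in_def)

lemma comp3_TV: "x \<in> comp_vars k \<Longrightarrow> \<exists>a b. x = TV k a b \<and> a < b \<and> b < 3"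
  by (auto simp: comp_vars_def)

lemma mu_nu:
  assumes "poly_in (Tvars 5) q" "hdeg (comp_vars 3) 1 q" "hdeg (comp_vars 4) 1 q"
  shows "psubst mu\<sigma> (nu q) = (q :: (var,'k::field_char_0) mpoly) \<and> poly_in (Tvars 3 \<union> Zvars) (nu q) \<and> hdeg Zvars 1 (nu q)"
proof -
  have key: "psubst mu\<sigma> (Nmon m :: (var,'k) mpoly) = Poly_Mapping.single m 1 \<and> poly_in (Tvars 3 \<union> Zvars) (Nmon m :: (var,'k) mpoly)
        \<and> hdeg Zvars 1 (Nmon m :: (var,'k) mpoly)" if m: "m \<in> Poly_Mapping.keys q" for m
  proof -
    have "Poly_Mapping.keys m \<subseteq> Tvars 5" "deg_in (comp_vars 3) m = 1" "deg_in (comp_vars 4) m = 1"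
      using assms m unfolding poly_in_def hdeg_def by auto
    then obtain m' x y where s: "m = m' + Poly_Mapping.single x 1 + Poly_Mapping.single y 1"
      "x \<in> comp_vars 3" "y \<in> comp_vars 4" "Poly_Mapping.keys m' \<subseteq> Tvars 3"
      by (rule T5_mon_split)
    obtain a b where x: "x = TV 3 a b" "a < b" "b < 3" using comp3_TV[OF s(2)] by blast
    obtain c d where y: "y = TV 4 c d" "c < d" "d < 3" using comp3_TV[OF s(3)] by blast
    have D: "Poly_Mapping.keys m' \<inter> (comp_vars 3 \<union> comp_vars 4) = {}"
      using s(4) by (auto simp: Tvars_def comp_vars_def)
    have N: "Nmon m = (Poly_Mapping.single m' 1 * Lf a b c d :: (var,'k) mpoly)"
      using Nmon_eval[OF D s(2,3)] s(1) x(1) y(1) by simp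
    have "psubst mu\<sigma> (Nmon m :: (var,'k) mpoly) = Poly_Mapping.single m' 1 * (PVar x * PVar y)"
      unfolding N using x y s(4) by (simp add: psubst_hom.hom_mult psubst_single mon_mu_T3 mu_Lf)
    also have "\<dots> = Poly_Mapping.single m 1"
      using s(1) by (simp add: PVar_def mult_single add.assoc)
    finally have 1: "psubst mu\<sigma> (Nmon m :: (var,'k) mpoly) = Poly_Mapping.single m 1" .
    have 2: "poly_in (Tvars 3 \<union> Zvars) (Nmon m :: (var,'k) mpoly)"
      unfolding N using Lf_props[of a b c d] s(4)
      by (auto intro!: poly_in_mult poly_in_single intro: poly_in_mono)
    have "hdeg Zvars (0 + 1) (Nmon m :: (var,'k) mpoly)"
      unfolding N using Lf_props[of a b c d] s(4)
      by (intro hdeg_mult hdeg_single0) (auto simp: Tvars_def Zvars_def)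
    then show ?thesis using 1 2 by simp
  qed
  have e: "nu q = (\<Sum>m\<in>Poly_Mapping.keys q. PConst (Poly_Mapping.lookup q m) * Nmon m)"
    by (simp add: nu_def lin_def)
  have "psubst mu\<sigma> (nu q) = (\<Sum>m\<in>Poly_Mapping.keys q. PConst (Poly_Mapping.lookup q m) * Poly_Mapping.single m 1)"
    unfolding e using key by (simp add: psubst_hom.hom_sum psubst_hom.hom_mult)
  also have "\<dots> = q" by (rule poly_expand[symmetric])
  finally show ?thesis unfolding e using key
    by (auto intro!: poly_in_sum poly_in_mult hdeg_sum hdeg_PConst_mult)
qed

lemma so_mu_comm:
  assumes "(h :: 'k::field mat) \<in> SO3" "poly_in (Tvars 3 \<union> Zvars) p"
  shows "so_act h (mu_star p) = mu_star (so_act h p)"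
proof -
  have "so_act h (mu_star p) = psubst (\<lambda>v. psubst (so\<sigma> h) (mu\<sigma> v)) p"
    by (simp add: so_act_eq mu_star_eq psubst_comp)
  also have "\<dots> = psubst (\<lambda>v. psubst mu\<sigma> (so\<sigma> h v)) p"
    by (rule psubst_cong[OF assms(2)]) (simp add: F2[OF assms(1)])
  also have "\<dots> = mu_star (so_act h p)"
    by (simp add: so_act_eq mu_star_eq psubst_comp)
  finally show ?thesis .
qed

lemma so_gl_comm:
  assumes "g \<in> carrier_mat 3 3" "h \<in> carrier_mat 3 3" "poly_in (Tvars 5 \<union> Zvars) p"
  shows "so_act h (gl_act g p) = gl_act g (so_act h p)"
proof -
  have "so_act h (gl_act g p) = psubst (\<lambda>v. psubst (so\<sigma> h) (gl\<sigma> g v)) p"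
    by (simp add: so_act_eq gl_act_eq psubst_comp)
  also have "\<dots> = psubst (\<lambda>v. psubst (gl\<sigma> g) (so\<sigma> h v)) p"
    by (rule psubst_cong[OF assms(3)]) (simp add: F5[OF assms(1,2)])
  also have "\<dots> = gl_act g (so_act h p)"
    by (simp add: so_act_eq gl_act_eq psubst_comp)
  finally show ?thesis .
qed

lemma mu_gl_comm:
  assumes "poly_in (Tvars 3 \<union> Zvars) p"
  shows "mu_star (gl_act g p) = gl_act g (mu_star p)"
proof -
  have "mu_star (gl_act g p) = psubst (\<lambda>v. psubst mu\<sigma> (gl\<sigma> g v)) p"
    by (simp add: mu_star_eq gl_act_eq psubst_comp)
  also have "\<dots> = psubst (\<lambda>v. psubst (gl\<sigma> g) (mu\<sigma> v)) p"
    by (rule psubst_cong[OF assms]) (simp add: F6)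
  also have "\<dots> = gl_act g (mu_star p)"
    by (simp add: mu_star_eq gl_act_eq psubst_comp)
  finally show ?thesis .
qed

lemma inv_TZ_iff: "p \<in> inv_TZ_deg1 \<longleftrightarrow> poly_in (Tvars 3 \<union> Zvars) p \<and> hdeg Zvars 1 p \<and> so_invariant p"
  by (auto simp: inv_TZ_deg1_def hdeg_def)

lemma inv_T5_iff: "p \<in> inv_T5_deg11 \<longleftrightarrow> poly_in (Tvars 5) p \<and> hdeg (comp_vars 3) 1 p \<and> hdeg (comp_vars 4) 1 p \<and> so_invariant p"
  by (auto simp: inv_T5_deg11_def hdeg_def)

lemma so_DTZ:
  assumes "h \<in> carrier_mat 3 3" "poly_in (Tvars 3 \<union> Zvars) p" "hdeg Zvars 1 p"
  shows "poly_in (Tvars 3 \<union> Zvars) (so_act h p) \<and> hdeg Zvars 1 (so_act h p)"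
proof
  show "poly_in (Tvars 3 \<union> Zvars) (so_act h p)"
    unfolding so_act_eq by (rule poly_in_psubst[OF assms(2)]) (use F1[OF assms(1)] in blast)
  show "hdeg Zvars 1 (so_act h p)"
    unfolding so_act_eq by (rule hdeg_psubst[OF assms(2,3)]) (use F1[OF assms(1)] in blast)
qed

lemma VTZ_sub: "Tvars 3 \<union> Zvars \<subseteq> Tvars 5 \<union> Zvars" by (auto simp: Tvars_def)
lemma T5_sub: "Tvars 5 \<subseteq> Tvars 5 \<union> Zvars" by auto


theorem lemma3p1:
  shows "(\<forall>g\<in>(GL3 :: 'k::field_char_0 mat set). \<forall>p\<in>inv_TZ_deg1. gl_act g p \<in> (inv_TZ_deg1 :: (var,'k) mpoly set))
       \<and> (\<forall>g\<in>(GL3 :: 'k mat set). \<forall>p\<in>inv_T5_deg11. gl_act g p \<in> (inv_T5_deg11 :: (var,'k) mpoly set))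
       \<and> (\<forall>p\<in>inv_TZ_deg1. \<forall>q\<in>inv_TZ_deg1. \<forall>c::'k.
            mu_star (p + q) = mu_star p + mu_star q \<and> mu_star (PConst c * p) = PConst c * mu_star p)
       \<and> bij_betw (mu_star :: (var,'k) mpoly \<Rightarrow> _) inv_TZ_deg1 inv_T5_deg11
       \<and> (\<forall>g\<in>(GL3 :: 'k mat set). \<forall>p\<in>inv_TZ_deg1. mu_star (gl_act g p) = gl_act g (mu_star p))"
proof (intro conjI ballI allI)
  fix g :: "'k mat" and p :: "(var,'k) mpoly"
  assume g: "g \<in> GL3" and p: "p \<in> inv_TZ_deg1"
  have gc: "g \<in> carrier_mat 3 3" using g by (rule GL3_carrier)
  have P: "poly_in (Tvars 3 \<union> Zvars) p" "hdeg Zvars 1 p" "so_invariant p" using p by (auto simp: inv_TZ_iff)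
  have 1: "poly_in (Tvars 3 \<union> Zvars) (gl_act g p)"
    unfolding gl_act_eq by (rule poly_in_psubst[OF P(1)]) (use F3 in blast)
  have 2: "hdeg Zvars 1 (gl_act g p)"
    unfolding gl_act_eq by (rule hdeg_psubst[OF P(1,2)]) (use F3 in blast)
  have 3: "so_invariant (gl_act g p)"
    unfolding so_invariant_def
  proof
    fix h :: "'k mat" assume h: "h \<in> SO3"
    have "so_act h (gl_act g p) = gl_act g (so_act h p)"
      by (rule so_gl_comm[OF gc SO3_carrier[OF h] poly_in_mono[OF P(1) VTZ_sub]])
    also have "so_act h p = p" using P(3) h by (simp add: so_invariant_def)
    finally show "so_act h (gl_act g p) = gl_act g p" .
  qed
  show "gl_act g p \<in> inv_TZ_deg1" using 1 2 3 by (simp add: inv_TZ_iff)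
next
  fix g :: "'k mat" and p :: "(var,'k) mpoly"
  assume g: "g \<in> GL3" and p: "p \<in> inv_T5_deg11"
  have gc: "g \<in> carrier_mat 3 3" using g by (rule GL3_carrier)
  have P: "poly_in (Tvars 5) p" "hdeg (comp_vars 3) 1 p" "hdeg (comp_vars 4) 1 p" "so_invariant p"
    using p by (auto simp: inv_T5_iff)
  have 1: "poly_in (Tvars 5) (gl_act g p)"
    unfolding gl_act_eq by (rule poly_in_psubst[OF P(1)]) (use F4 in blast)
  have 2: "hdeg (comp_vars 3) 1 (gl_act g p)"
    unfolding gl_act_eq by (rule hdeg_psubst[OF P(1,2)]) (use F4 in blast)
  have 3: "hdeg (comp_vars 4) 1 (gl_act g p)"
    unfolding gl_act_eq by (rule hdeg_psubst[OF P(1,3)]) (use F4 in blast)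
  have 4: "so_invariant (gl_act g p)"
    unfolding so_invariant_def
  proof
    fix h :: "'k mat" assume h: "h \<in> SO3"
    have "so_act h (gl_act g p) = gl_act g (so_act h p)"
      by (rule so_gl_comm[OF gc SO3_carrier[OF h] poly_in_mono[OF P(1) T5_sub]])
    also have "so_act h p = p" using P(4) h by (simp add: so_invariant_def)
    finally show "so_act h (gl_act g p) = gl_act g p" .
  qed
  show "gl_act g p \<in> inv_T5_deg11" using 1 2 3 4 by (simp add: inv_T5_iff)
next
  fix p q :: "(var,'k) mpoly" and c :: 'k
  show "mu_star (p + q) = mu_star p + mu_star q" by (simp add: mu_star_eq psubst_hom.hom_add)
  show "mu_star (PConst c * p) = PConst c * mu_star p" by (simp add: mu_star_eq psubst_hom.hom_mult)
next
  fix g :: "'k mat" and p :: "(var,'k) mpoly"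
  assume p: "p \<in> inv_TZ_deg1"
  then have "poly_in (Tvars 3 \<union> Zvars) p" by (simp add: inv_TZ_iff)
  then show "mu_star (gl_act g p) = gl_act g (mu_star p)" by (rule mu_gl_comm)
next
  have left: "nu (mu_star p) = p" if "p \<in> inv_TZ_deg1" for p :: "(var,'k) mpoly"
    using that by (simp add: inv_TZ_iff mu_star_eq nu_mu)
  have into: "mu_star p \<in> inv_T5_deg11" if p: "p \<in> inv_TZ_deg1" for p :: "(var,'k) mpoly"
  proof -
    have P: "poly_in (Tvars 3 \<union> Zvars) p" "hdeg Zvars 1 p" "so_invariant p" using p by (auto simp: inv_TZ_iff)
    have 1: "poly_in (Tvars 5) (mu_star p)"
      unfolding mu_star_eq by (rule poly_in_psubst[OF P(1)]) (use F7 in blast)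
    have 2: "hdeg (comp_vars 3) 1 (mu_star p)"
      unfolding mu_star_eq by (rule hdeg_psubst[OF P(1,2)]) (use F7 in blast)
    have 3: "hdeg (comp_vars 4) 1 (mu_star p)"
      unfolding mu_star_eq by (rule hdeg_psubst[OF P(1,2)]) (use F7 in blast)
    have 4: "so_invariant (mu_star p)"
      unfolding so_invariant_def
    proof
      fix h :: "'k mat" assume h: "h \<in> SO3"
      have "so_act h (mu_star p) = mu_star (so_act h p)" by (rule so_mu_comm[OF h P(1)])
      also have "so_act h p = p" using P(3) h by (simp add: so_invariant_def)
      finally show "so_act h (mu_star p) = mu_star p" .
    qed
    show ?thesis using 1 2 3 4 by (simp add: inv_T5_iff)
  qed
  have onto: "q \<in> mu_star ` inv_TZ_deg1" if q: "q \<in> inv_T5_deg11" for q :: "(var,'k) mpoly"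
  proof -
    have Q: "poly_in (Tvars 5) q" "hdeg (comp_vars 3) 1 q" "hdeg (comp_vars 4) 1 q" "so_invariant q"
      using q by (auto simp: inv_T5_iff)
    note N = mu_nu[OF Q(1-3)]
    let ?p = "nu q"
    have mp: "mu_star ?p = q" using N by (simp add: mu_star_eq)
    have inv: "so_invariant ?p"
      unfolding so_invariant_def
    proof
      fix h :: "'k mat" assume h: "h \<in> SO3"
      have D: "poly_in (Tvars 3 \<union> Zvars) (so_act h ?p)" "hdeg Zvars 1 (so_act h ?p)"
        using so_DTZ[OF SO3_carrier[OF h]] N by blast+
      have "mu_star (so_act h ?p) = so_act h (mu_star ?p)" using so_mu_comm[OF h] N by simp
      also have "\<dots> = q" using mp Q(4) h by (simp add: so_invariant_def)
      finally have "mu_star (so_act h ?p) = q" .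
      then have "nu (mu_star (so_act h ?p)) = ?p" by simp
      moreover have "nu (mu_star (so_act h ?p)) = so_act h ?p"
        using D by (simp add: mu_star_eq nu_mu)
      ultimately show "so_act h ?p = ?p" by simp
    qed
    have "?p \<in> inv_TZ_deg1" using N inv by (simp add: inv_TZ_iff)
    then show ?thesis using mp by (metis image_eqI)
  qed
  show "bij_betw (mu_star :: (var,'k) mpoly \<Rightarrow> _) inv_TZ_deg1 inv_T5_deg11"
    unfolding bij_betw_def
  proof
    show "inj_on (mu_star :: (var,'k) mpoly \<Rightarrow> _) inv_TZ_deg1"
      by (rule inj_onI) (metis left)
    show "mu_star ` inv_TZ_deg1 = (inv_T5_deg11 :: (var,'k) mpoly set)"
      using into onto by blast
  qed
qed


end
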